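(* Let $E$ be a countable Borel equivalence relation on a standard Borel space $X$ induced by a Borel action of a countable group $\Gamma$. If $\mathcal C_0,\mathcal C_1,\dots$ are countably many clubs of good Polish topologies on $X$, then $\bigcap_i\mathcal C_i$ is a club.
   Context: A Polish topology on $X$ is good if it generates the Borel structure of $X$ and makes the $\Gamma$-action continuous. A class $\mathcal C$ of good Polish topologies is a club if (cofinal) every good Polish topology is contained in some member of $\mathcal C$, and (closed) whenever $\tau_0\subseteq\tau_1\subseteq\cdots$ all lie in $\mathcal C$, the topology generated by $\bigcup_i\tau_i$ lies in $\mathcal C$. *)

theory Defs
  imports "HOL-Analysis.Analysis" "HOL-Algebra.Group_Action"
begin

definition Polish_top :: "'a topology \<Rightarrow> bool" where
  "Polish_top T \<longleftrightarrow> completely_metrizable_space T \<and> separable_space T"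

definition borel_sets_of :: "'a topology \<Rightarrow> 'a set set" where
  "borel_sets_of T = sigma_sets (topspace T) {U. openin T U}"

definition standard_Borel :: "'a measure \<Rightarrow> bool" where
  "standard_Borel M \<longleftrightarrow> (\<exists>T. Polish_top T \<and> topspace T = space M \<and> borel_sets_of T = sets M)"

definition Borel_action :: "('g, 'b) monoid_scheme \<Rightarrow> 'a measure \<Rightarrow> ('g \<Rightarrow> 'a \<Rightarrow> 'a) \<Rightarrow> bool" where
  "Borel_action G M \<phi> \<longleftrightarrow> group_action G (space M) \<phi> \<and> (\<forall>g\<in>carrier G. \<phi> g \<in> M \<rightarrow>\<^sub>M M)"

definition good_top :: "('g, 'b) monoid_scheme \<Rightarrow> 'a measure \<Rightarrow> ('g \<Rightarrow> 'a \<Rightarrow> 'a) \<Rightarrow> 'a topology \<Rightarrow> bool" where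
  "good_top G M \<phi> T \<longleftrightarrow> Polish_top T \<and> topspace T = space M \<and> borel_sets_of T = sets M
     \<and> (\<forall>g\<in>carrier G. continuous_map T T (\<phi> g))"

definition top_le :: "'a topology \<Rightarrow> 'a topology \<Rightarrow> bool" where
  "top_le T S \<longleftrightarrow> (\<forall>U. openin T U \<longrightarrow> openin S U)"

definition club :: "('g, 'b) monoid_scheme \<Rightarrow> 'a measure \<Rightarrow> ('g \<Rightarrow> 'a \<Rightarrow> 'a) \<Rightarrow> 'a topology set \<Rightarrow> bool" where
  "club G M \<phi> C \<longleftrightarrow>
     C \<subseteq> {T. good_top G M \<phi> T}
   \<and> (\<forall>T. good_top G M \<phi> T \<longrightarrow> (\<exists>S\<in>C. top_le T S))
   \<and> (\<forall>\<tau> :: nat \<Rightarrow> 'a topology. (\<forall>i. \<tau> i \<in> C) \<longrightarrow> (\<forall>i. top_le (\<tau> i) (\<tau> (Suc i))) \<longrightarrow>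
        topology_generated_by (\<Union>i. {U. openin (\<tau> i) U}) \<in> C)"

end

theory Submission
  imports Defs
begin

primrec chainseq :: "(nat \<Rightarrow> 'a topology set) \<Rightarrow> 'a topology \<Rightarrow> nat \<Rightarrow> 'a topology" where
  "chainseq C T 0 = (SOME S. S \<in> C (fst (prod_decode 0)) \<and> top_le T S)"
| "chainseq C T (Suc k) = (SOME S. S \<in> C (fst (prod_decode (Suc k))) \<and> top_le (chainseq C T k) S)"

lemma top_le_trans: "top_le A B \<Longrightarrow> top_le B D \<Longrightarrow> top_le A D"
  unfolding top_le_def by blast

lemma chainseq_props:
  assumes cl: "\<And>i. club G M \<phi> (C i)" and T: "good_top G M \<phi> T"
  shows "chainseq C T k \<in> C (fst (prod_decode k)) \<and>
         (case k of 0 \<Rightarrow> top_le T (chainseq C T 0) | Suc j \<Rightarrow> top_le (chainseq C T j) (chainseq C T k))"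
proof (induction k)
  case 0
  have "\<exists>S\<in>C (fst (prod_decode 0)). top_le T S" using cl[of "fst (prod_decode 0)"] T
    unfolding club_def by blast
  then show ?case by (simp, metis (mono_tags, lifting) someI_ex)
next
  case (Suc k)
  have "chainseq C T k \<in> C (fst (prod_decode k))" using Suc by simp
  then have "good_top G M \<phi> (chainseq C T k)" using cl[of "fst (prod_decode k)"] unfolding club_def by blast
  then have "\<exists>S\<in>C (fst (prod_decode (Suc k))). top_le (chainseq C T k) S"
    using cl[of "fst (prod_decode (Suc k))"] unfolding club_def by blast
  then show ?case by (simp, metis (mono_tags, lifting) someI_ex)
qed

lemma chainseq_mono:
  assumes cl: "\<And>i. club G M \<phi> (C i)" and T: "good_top G M \<phi> T" and "m \<le> n"
  shows "top_le (chainseq C T m) (chainseq C T n)"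
  using assms(3)
proof (induction n rule: dec_induct)
  case base then show ?case by (simp add: top_le_def)
next
  case (step n)
  have "top_le (chainseq C T n) (chainseq C T (Suc n))"
    using chainseq_props[of G M \<phi> C T "Suc n", OF cl T] by simp
  then show ?case using step top_le_trans by blast
qed

lemma pe_smono: "strict_mono (\<lambda>j. prod_encode (i, j))"
  by (rule strict_monoI_Suc) (simp add: prod_encode_def)

lemma club_closed: "club G M \<phi> C \<Longrightarrow> (\<And>i. \<tau> i \<in> C) \<Longrightarrow> (\<And>i. top_le (\<tau> i) (\<tau> (Suc i))) \<Longrightarrow>
   topology_generated_by (\<Union>i. {U. openin (\<tau> i) U}) \<in> C"
  unfolding club_def by blast

theorem lemma3p4:
  fixes G :: "('g, 'b) monoid_scheme" and M :: "'a measure" and \<phi> :: "'g \<Rightarrow> 'a \<Rightarrow> 'a"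
    and C :: "nat \<Rightarrow> 'a topology set"
  assumes "group G" and "countable (carrier G)"
    and "standard_Borel M" and "Borel_action G M \<phi>"
    and "\<And>i. club G M \<phi> (C i)"
  shows "club G M \<phi> (\<Inter>i. C i)"
proof -
  note cl = assms(5)
  have A: "(\<Inter>i. C i) \<subseteq> {T. good_top G M \<phi> T}" using cl[of 0] unfolding club_def by blast
  have B: "\<exists>S\<in>(\<Inter>i. C i). top_le T S" if T: "good_top G M \<phi> T" for T
  proof -
    let ?\<tau> = "chainseq C T"
    let ?S = "topology_generated_by (\<Union>k. {U. openin (?\<tau> k) U})"
    have "?S \<in> C i" for i
    proof -
      define s where "s = (\<lambda>j. prod_encode (i, j))"
      have sm: "strict_mono s" unfolding s_def by (rule pe_smono)
      have mem: "?\<tau> (s j) \<in> C i" for j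
        using chainseq_props[of G M \<phi> C T "s j", OF cl T] by (simp add: s_def)
      have ch: "top_le (?\<tau> (s j)) (?\<tau> (s (Suc j)))" for j
        by (rule chainseq_mono[of G M \<phi> C T, OF cl T]) (simp add: sm strict_mono_leD)
      have eq: "(\<Union>j. {U. openin (?\<tau> (s j)) U}) = (\<Union>k. {U. openin (?\<tau> k) U})"
      proof
        show "(\<Union>j. {U. openin (?\<tau> (s j)) U}) \<subseteq> (\<Union>k. {U. openin (?\<tau> k) U})" by blast
        show "(\<Union>k. {U. openin (?\<tau> k) U}) \<subseteq> (\<Union>j. {U. openin (?\<tau> (s j)) U})"
        proof
          fix U assume "U \<in> (\<Union>k. {U. openin (?\<tau> k) U})"
          then obtain k where k: "openin (?\<tau> k) U" by blast
          have "k \<le> s k" using sm by (simp add: strict_mono_imp_increasing)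
          then have "top_le (?\<tau> k) (?\<tau> (s k))" by (rule chainseq_mono[of G M \<phi> C T, OF cl T])
          then show "U \<in> (\<Union>j. {U. openin (?\<tau> (s j)) U})" using k unfolding top_le_def by blast
        qed
      qed
      have "topology_generated_by (\<Union>j. {U. openin (?\<tau> (s j)) U}) \<in> C i"
        by (rule club_closed[OF cl[of i]]) (rule mem, rule ch)
      then show ?thesis using eq by simp
    qed
    moreover have "top_le T ?S"
    proof -
      have "top_le T (?\<tau> 0)" using chainseq_props[of G M \<phi> C T 0, OF cl T] by simp
      moreover have "top_le (?\<tau> 0) ?S" unfolding top_le_def openin_topology_generated_by_iff
      proof (intro allI impI)
        fix U assume "openin (?\<tau> 0) U"
        then show "generate_topology_on (\<Union>k. {U. openin (?\<tau> k) U}) U"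
          by (intro generate_topology_on.Basis) blast
      qed
      ultimately show ?thesis by (rule top_le_trans)
    qed
    ultimately show ?thesis by blast
  qed
  have D: "topology_generated_by (\<Union>i. {U. openin (\<tau> i) U}) \<in> (\<Inter>i. C i)"
    if "\<forall>i. \<tau> i \<in> (\<Inter>i. C i)" "\<forall>i. top_le (\<tau> i) (\<tau> (Suc i))" for \<tau> :: "nat \<Rightarrow> 'a topology"
  proof (intro InterI, elim rangeE)
    fix X i assume "X = C i"
    have "\<forall>j. \<tau> j \<in> C i" using that(1) by blast
    show "topology_generated_by (\<Union>i. {U. openin (\<tau> i) U}) \<in> X"
      unfolding \<open>X = C i\<close> by (rule club_closed[OF cl[of i]]) (use that(2) \<open>\<forall>j. \<tau> j \<in> C i\<close> in auto)
  qed
  show ?thesis unfolding club_def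
  proof (intro conjI allI impI)
    show "(\<Inter>i. C i) \<subseteq> {T. good_top G M \<phi> T}" by (rule A)
  next
    fix T assume "good_top G M \<phi> T" then show "\<exists>S\<in>(\<Inter>i. C i). top_le T S" by (rule B)
  next
    fix \<tau> :: "nat \<Rightarrow> 'a topology"
    assume "\<forall>i. \<tau> i \<in> (\<Inter>i. C i)" "\<forall>i. top_le (\<tau> i) (\<tau> (Suc i))"
    then show "topology_generated_by (\<Union>i. {U. openin (\<tau> i) U}) \<in> (\<Inter>i. C i)" by (rule D)
  qed
qed

end
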